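(* Consider the network Polya contagion process on a connected undirected graph $\mathcal{G}=(V,\mathcal{E})$ with $\Delta_{r,i}(n)=\Delta_{b,i}(n)=\Delta$ and $T_i=T$ for all nodes $i\in V$ and all times $n$. Fix a node $i$. Then the individual red-ball proportion process $\{U_{i,n}\}_{n=1}^\infty$ is a martingale with respect to the whole-network draw process $\{Z_n\}_{n=1}^\infty=\{(Z_{1,n},\dots,Z_{N,n})\}_{n=1}^\infty$ if and only if, almost surely (for all $n$), \[ \frac{1}{|\mathcal{N}_i|}\sum_{j\in\mathcal{N}_i}U_{j,n-1}=U_{i,n-1}. \]
   Context: Network Polya contagion process: $\mathcal{G}=(V,\mathcal{E})$ is a connected undirected graph without self-loops, $V=\{1,\dots,N\}$, $\mathcal{N}_i=\{v:(i,v)\in\mathcal{E}\}$, $\mathcal{N}_i'=\{i\}\cup\mathcal{N}_i$. Each node $i$ has an urn initially containing $R_i\in\mathbb{Z}_{>0}$ red and $B_i\in\mathbb{Z}_{>0}$ black balls, $T_i=R_i+B_i$. The super urn of node $i$ is the union of the urns of nodes in $\mathcal{N}_i'$. At each time $t=1,2,\dots$ every node $i$ simultaneously draws from its super urn; $Z_{i,t}=1$ if red, $0$ if black; then $\Delta_{r,i}(t)\ge0$ red balls (if red drawn) or $\Delta_{b,i}(t)\ge0$ black balls (if black drawn) are added to node $i$'s own urn. Let $X_{j,n}=T_j+\sum_{t=1}^n\big(Z_{j,t}\Delta_{r,j}(t)+(1-Z_{j,t})\Delta_{b,j}(t)\big)$ and $U_{j,n}=\big(R_j+\sum_{t=1}^nZ_{j,t}\Delta_{r,j}(t)\big)/X_{j,n}$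 (proportion of red balls in node $j$'s own urn after the $n$th draw), and $S_{i,n}=\sum_{j\in\mathcal{N}_i'}U_{j,n}X_{j,n}/\sum_{j\in\mathcal{N}_i'}X_{j,n}$ (proportion of red in node $i$'s super urn). Given the whole history $\{Z_j^{n-1}\}_{j=1}^N$, the time-$n$ draws are conditionally independent with $P(Z_{i,n}=1\mid\{Z_j^{n-1}\}_{j=1}^N)=S_{i,n-1}$. "Martingale with respect to $\{Z_n\}$" means $E|U_{i,n}|<\infty$ and $E[U_{i,n}\mid Z_1,\dots,Z_{n-1}]=U_{i,n-1}$ a.s. for all $n$. *)

theory Defs
  imports "HOL-Probability.Probability"
begin

definition simple_graph :: "nat \<Rightarrow> (nat \<Rightarrow> nat \<Rightarrow> bool) \<Rightarrow> bool" where
  "simple_graph N E \<longleftrightarrow>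
     (\<forall>i j. E i j \<longrightarrow> i \<in> {1..N} \<and> j \<in> {1..N}) \<and>
     (\<forall>i j. E i j \<longrightarrow> E j i) \<and> (\<forall>i. \<not> E i i)"

definition connected_graph :: "nat \<Rightarrow> (nat \<Rightarrow> nat \<Rightarrow> bool) \<Rightarrow> bool" where
  "connected_graph N E \<longleftrightarrow> (\<forall>i\<in>{1..N}. \<forall>j\<in>{1..N}. E\<^sup>*\<^sup>* i j)"

definition nbrs :: "nat \<Rightarrow> (nat \<Rightarrow> nat \<Rightarrow> bool) \<Rightarrow> nat \<Rightarrow> nat set" where
  "nbrs N E i = {v \<in> {1..N}. E i v}"

definition cnbrs :: "nat \<Rightarrow> (nat \<Rightarrow> nat \<Rightarrow> bool) \<Rightarrow> nat \<Rightarrow> nat set" where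
  "cnbrs N E i = insert i (nbrs N E i)"

text \<open>A (realised) draw history z: z t j = True iff node j drew red at time t.
  Dr j t, Db j t: red/black reinforcement of node j at time t.\<close>

definition Xballs :: "(nat \<Rightarrow> nat) \<Rightarrow> (nat \<Rightarrow> nat) \<Rightarrow> (nat \<Rightarrow> nat \<Rightarrow> nat) \<Rightarrow> (nat \<Rightarrow> nat \<Rightarrow> nat)
     \<Rightarrow> (nat \<Rightarrow> nat \<Rightarrow> bool) \<Rightarrow> nat \<Rightarrow> nat \<Rightarrow> real" where
  "Xballs R B Dr Db z j n =
     real (R j + B j) + (\<Sum>t\<in>{1..n}. if z t j then real (Dr j t) else real (Db j t))"

definition Uprop :: "(nat \<Rightarrow> nat) \<Rightarrow> (nat \<Rightarrow> nat) \<Rightarrow> (nat \<Rightarrow> nat \<Rightarrow> nat) \<Rightarrow> (nat \<Rightarrow> nat \<Rightarrow> nat)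
     \<Rightarrow> (nat \<Rightarrow> nat \<Rightarrow> bool) \<Rightarrow> nat \<Rightarrow> nat \<Rightarrow> real" where
  "Uprop R B Dr Db z j n =
     (real (R j) + (\<Sum>t\<in>{1..n}. if z t j then real (Dr j t) else 0)) / Xballs R B Dr Db z j n"

definition Sprop :: "nat \<Rightarrow> (nat \<Rightarrow> nat \<Rightarrow> bool) \<Rightarrow> (nat \<Rightarrow> nat) \<Rightarrow> (nat \<Rightarrow> nat)
     \<Rightarrow> (nat \<Rightarrow> nat \<Rightarrow> nat) \<Rightarrow> (nat \<Rightarrow> nat \<Rightarrow> nat) \<Rightarrow> (nat \<Rightarrow> nat \<Rightarrow> bool) \<Rightarrow> nat \<Rightarrow> nat \<Rightarrow> real" where
  "Sprop N E R B Dr Db z i n =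
     (\<Sum>j\<in>cnbrs N E i. Uprop R B Dr Db z j n * Xballs R B Dr Db z j n)
       / (\<Sum>j\<in>cnbrs N E i. Xballs R B Dr Db z j n)"

definition hist_event :: "'a measure \<Rightarrow> nat \<Rightarrow> (nat \<Rightarrow> nat \<Rightarrow> 'a \<Rightarrow> bool) \<Rightarrow> nat
     \<Rightarrow> (nat \<Rightarrow> nat \<Rightarrow> bool) \<Rightarrow> 'a set" where
  "hist_event M N Z n h = {\<omega> \<in> space M. \<forall>t\<in>{1..n}. \<forall>j\<in>{1..N}. Z t j \<omega> = h t j}"

definition hist :: "nat \<Rightarrow> (nat \<Rightarrow> nat \<Rightarrow> 'a \<Rightarrow> bool) \<Rightarrow> nat \<Rightarrow> 'a \<Rightarrow> (nat \<Rightarrow> nat \<Rightarrow> bool)" where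
  "hist N Z n \<omega> = (\<lambda>t j. if t \<in> {1..n} \<and> j \<in> {1..N} then Z t j \<omega> else False)"

definition draw_filtration :: "'a measure \<Rightarrow> nat \<Rightarrow> (nat \<Rightarrow> nat \<Rightarrow> 'a \<Rightarrow> bool) \<Rightarrow> nat \<Rightarrow> 'a measure" where
  "draw_filtration M N Z n = vimage_algebra (space M) (hist N Z n) (count_space UNIV)"

definition Uproc :: "nat \<Rightarrow> (nat \<Rightarrow> nat) \<Rightarrow> (nat \<Rightarrow> nat) \<Rightarrow> (nat \<Rightarrow> nat \<Rightarrow> nat) \<Rightarrow> (nat \<Rightarrow> nat \<Rightarrow> nat)
     \<Rightarrow> (nat \<Rightarrow> nat \<Rightarrow> 'a \<Rightarrow> bool) \<Rightarrow> nat \<Rightarrow> nat \<Rightarrow> 'a \<Rightarrow> real" where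
  "Uproc N R B Dr Db Z j n \<omega> = Uprop R B Dr Db (hist N Z n \<omega>) j n"

text \<open>Network Polya contagion law: conditionally on the history Z_1..Z_{n-1}, the draws
  at time n are independent with P(Z_{i,n} = 1 | history) = S_{i,n-1}.\<close>
definition polya_law :: "'a measure \<Rightarrow> nat \<Rightarrow> (nat \<Rightarrow> nat \<Rightarrow> bool) \<Rightarrow> (nat \<Rightarrow> nat) \<Rightarrow> (nat \<Rightarrow> nat)
     \<Rightarrow> (nat \<Rightarrow> nat \<Rightarrow> nat) \<Rightarrow> (nat \<Rightarrow> nat \<Rightarrow> nat) \<Rightarrow> (nat \<Rightarrow> nat \<Rightarrow> 'a \<Rightarrow> bool) \<Rightarrow> bool" where
  "polya_law M N E R B Dr Db Z \<longleftrightarrow>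
     (\<forall>t j. t \<ge> 1 \<longrightarrow> j \<in> {1..N} \<longrightarrow> Z t j \<in> measurable M (count_space UNIV)) \<and>
     (\<forall>n \<ge> 1. \<forall>h (z :: nat \<Rightarrow> bool).
        measure M (hist_event M N Z (n - 1) h \<inter> {\<omega> \<in> space M. \<forall>j\<in>{1..N}. Z n j \<omega> = z j})
        = measure M (hist_event M N Z (n - 1) h) *
          (\<Prod>j\<in>{1..N}. if z j then Sprop N E R B Dr Db h j (n - 1)
                                 else 1 - Sprop N E R B Dr Db h j (n - 1)))"

definition is_martingale_wrt_draws :: "'a measure \<Rightarrow> nat \<Rightarrow> (nat \<Rightarrow> nat \<Rightarrow> 'a \<Rightarrow> bool)
     \<Rightarrow> (nat \<Rightarrow> 'a \<Rightarrow> real) \<Rightarrow> bool" where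
  "is_martingale_wrt_draws M N Z X \<longleftrightarrow>
     (\<forall>n. integrable M (X n)) \<and>
     (\<forall>n \<ge> 1. AE \<omega> in M. real_cond_exp M (draw_filtration M N Z (n - 1)) (X n) \<omega> = X (n - 1) \<omega>)"

end

theory Submission
  imports Defs
begin

definition Hset :: "nat \<Rightarrow> nat \<Rightarrow> (nat \<Rightarrow> nat \<Rightarrow> bool) set" where
  "Hset N n = {h. \<forall>t j. h t j \<longrightarrow> t \<in> {1..n} \<and> j \<in> {1..N}}"

lemma Hset_finite: "finite (Hset N n)"
proof -
  have "Hset N n \<subseteq> (\<lambda>S t j. (t,j) \<in> S) ` Pow ({1..n} \<times> {1..N})"
  proof
    fix h assume "h \<in> Hset N n"
    then have "h = (\<lambda>t j. (t,j) \<in> {(t,j). h t j})" "{(t,j). h t j} \<in> Pow ({1..n} \<times> {1..N})"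
      by (auto simp: Hset_def)
    then show "h \<in> (\<lambda>S t j. (t,j) \<in> S) ` Pow ({1..n} \<times> {1..N})" by blast
  qed
  then show ?thesis by (rule finite_subset) auto
qed

lemma hist_in_Hset: "hist N Z n \<omega> \<in> Hset N n"
  by (auto simp: Hset_def hist_def split: if_splits)

lemma hist_eq_event:
  assumes "h \<in> Hset N n"
  shows "{\<omega>\<in>space M. hist N Z n \<omega> = h} = hist_event M N Z n h"
proof -
  have "hist N Z n \<omega> = h \<longleftrightarrow> (\<forall>t\<in>{1..n}. \<forall>j\<in>{1..N}. Z t j \<omega> = h t j)" for \<omega>
  proof
    assume hh: "hist N Z n \<omega> = h"
    show "\<forall>t\<in>{1..n}. \<forall>j\<in>{1..N}. Z t j \<omega> = h t j"
    proof (intro ballI)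
      fix t j assume tj: "t \<in> {1..n}" "j \<in> {1..N}"
      have "h t j = hist N Z n \<omega> t j" using hh by simp
      then show "Z t j \<omega> = h t j" using tj by (simp add: hist_def)
    qed
  next
    assume H: "\<forall>t\<in>{1..n}. \<forall>j\<in>{1..N}. Z t j \<omega> = h t j"
    show "hist N Z n \<omega> = h"
    proof (intro ext)
      fix t j
      show "hist N Z n \<omega> t j = h t j"
      proof (cases "t \<in> {1..n} \<and> j \<in> {1..N}")
        case True
        then show ?thesis using H by (simp add: hist_def)
      next
        case False
        then have "\<not> h t j" using assms unfolding Hset_def by blast
        then show ?thesis using False unfolding hist_def by (simp only: if_False)
      qed
    qed
  qed
  then show ?thesis unfolding hist_event_def by blast
qed

lemma Xballs_const:
  assumes "\<forall>j t. Dr j t = \<Delta> \<and> Db j t = \<Delta>"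
  shows "Xballs R B Dr Db z j m = real (R j + B j) + real m * real \<Delta>"
proof -
  have "(\<Sum>t\<in>{1..m}. if z t j then real (Dr j t) else real (Db j t)) = (\<Sum>t\<in>{1..m}. real \<Delta>)"
    using assms by (intro sum.cong) auto
  then show ?thesis by (simp add: Xballs_def)
qed

lemma hist_event_meas:
  assumes meas: "\<forall>t j. t \<ge> 1 \<longrightarrow> j \<in> {1..N} \<longrightarrow> Z t j \<in> measurable M (count_space UNIV)"
  shows "hist_event M N Z n h \<in> sets M"
proof -
  have "{\<omega>\<in>space M. \<forall>t\<in>{1..n}. \<forall>j\<in>{1..N}. Z t j \<omega> = h t j} \<in> sets M"
  proof (rule sets.sets_Collect_finite_All)
    fix t assume t: "t \<in> {1..n}"
    show "{\<omega>\<in>space M. \<forall>j\<in>{1..N}. Z t j \<omega> = h t j} \<in> sets M"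
    proof (rule sets.sets_Collect_finite_All)
      fix j assume j: "j \<in> {1..N}"
      have "Z t j \<in> measurable M (count_space UNIV)" using meas t j by auto
      then have "Z t j -` {h t j} \<inter> space M \<in> sets M" by (rule measurable_sets) auto
      moreover have "Z t j -` {h t j} \<inter> space M = {\<omega>\<in>space M. Z t j \<omega> = h t j}" by auto
      ultimately show "{\<omega>\<in>space M. Z t j \<omega> = h t j} \<in> sets M" by simp
    qed simp
  qed simp
  then show ?thesis by (simp add: hist_event_def)
qed

lemma hist_preimage:
  "hist N Z n -` A \<inter> space M = (\<Union>h\<in>A \<inter> Hset N n. hist_event M N Z n h)"
proof -
  have "hist N Z n -` A \<inter> space M = (\<Union>h\<in>A \<inter> Hset N n. {\<omega>\<in>space M. hist N Z n \<omega> = h})"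
    using hist_in_Hset[of N Z n] by auto
  also have "\<dots> = (\<Union>h\<in>A \<inter> Hset N n. hist_event M N Z n h)"
    using hist_eq_event[of _ N n M Z] by (intro SUP_cong) auto
  finally show ?thesis .
qed

lemma hist_meas:
  assumes meas: "\<forall>t j. t \<ge> 1 \<longrightarrow> j \<in> {1..N} \<longrightarrow> Z t j \<in> measurable M (count_space UNIV)"
  shows "hist N Z n \<in> measurable M (count_space UNIV)"
  unfolding measurable_def
proof (safe)
  fix A :: "(nat \<Rightarrow> nat \<Rightarrow> bool) set"
  show "hist N Z n -` A \<inter> space M \<in> sets M"
    unfolding hist_preimage
    using Hset_finite hist_event_meas[OF meas] by (intro sets.finite_UN) auto
qed auto

lemma filt_subalg:
  assumes meas: "\<forall>t j. t \<ge> 1 \<longrightarrow> j \<in> {1..N} \<longrightarrow> Z t j \<in> measurable M (count_space UNIV)"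
  shows "subalgebra M (draw_filtration M N Z n)"
  unfolding subalgebra_def draw_filtration_def
  using measurable_sets[OF hist_meas[OF meas]]
  by (auto simp: sets_vimage_algebra2)

lemma hist_meas_filt:
  "hist N Z n \<in> measurable (draw_filtration M N Z n) (count_space UNIV)"
  unfolding draw_filtration_def by (rule measurable_vimage_algebra1) auto

lemma comp_hist_meas_filt:
  "(\<lambda>\<omega>. g (hist N Z n \<omega>)) \<in> borel_measurable (draw_filtration M N Z n)"
  using measurable_compose[OF hist_meas_filt, of g borel] by simp

lemma integrable_hist:
  assumes "prob_space M"
    and meas: "\<forall>t j. t \<ge> 1 \<longrightarrow> j \<in> {1..N} \<longrightarrow> Z t j \<in> measurable M (count_space UNIV)"
  shows "integrable M (\<lambda>\<omega>. g (hist N Z n \<omega>) :: real)"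
proof -
  interpret prob_space M by fact
  show ?thesis
  proof (rule integrable_const_bound)
    show "AE x in M. norm (g (hist N Z n x)) \<le> (\<Sum>h\<in>Hset N n. \<bar>g h\<bar>)"
    proof (intro AE_I2)
      fix x
      show "norm (g (hist N Z n x)) \<le> (\<Sum>h\<in>Hset N n. \<bar>g h\<bar>)"
        using member_le_sum[of "hist N Z n x" "Hset N n" "\<lambda>h. \<bar>g h\<bar>", OF hist_in_Hset _ Hset_finite]
        by simp
    qed
    show "(\<lambda>\<omega>. g (hist N Z n \<omega>)) \<in> borel_measurable M"
      using measurable_compose[OF hist_meas[OF meas], of g borel] by simp
  qed
qed

lemma ev_meas:
  fixes Z :: "nat \<Rightarrow> nat \<Rightarrow> 'a \<Rightarrow> bool" and N n :: nat
  assumes meas: "\<forall>t j. t \<ge> 1 \<longrightarrow> j \<in> {1..N} \<longrightarrow> Z t j \<in> measurable M (count_space UNIV)"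
    and "n \<ge> 1" "J \<subseteq> {1..N}"
  shows "{\<omega>\<in>space M. \<forall>j\<in>J. Z n j \<omega> = z j} \<in> sets M"
proof (rule sets.sets_Collect_finite_All)
  fix j assume j: "j \<in> J"
  have "Z n j \<in> measurable M (count_space UNIV)" using meas assms j by auto
  then have "Z n j -` {z j} \<inter> space M \<in> sets M" by (rule measurable_sets) auto
  moreover have "Z n j -` {z j} \<inter> space M = {\<omega>\<in>space M. Z n j \<omega> = z j}" by auto
  ultimately show "{\<omega>\<in>space M. Z n j \<omega> = z j} \<in> sets M" by simp
next
  show "finite J" by (metis assms(3) finite_atLeastAtMost finite_subset)
qed

lemma law_marginal:
  assumes "prob_space M" "polya_law M N E R B Dr Db Z" "n \<ge> 1" "i \<in> {1..N}"
  shows "measure M (hist_event M N Z (n-1) h \<inter> {\<omega>\<in>space M. Z n i \<omega>})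
       = measure M (hist_event M N Z (n-1) h) * Sprop N E R B Dr Db h i (n-1)"
proof -
  interpret prob_space M by fact
  have meas: "\<forall>t j. t \<ge> 1 \<longrightarrow> j \<in> {1..N} \<longrightarrow> Z t j \<in> measurable M (count_space UNIV)"
    and law: "\<And>z. measure M (hist_event M N Z (n - 1) h \<inter> {\<omega> \<in> space M. \<forall>j\<in>{1..N}. Z n j \<omega> = z j})
        = measure M (hist_event M N Z (n - 1) h) *
          (\<Prod>j\<in>{1..N}. if z j then Sprop N E R B Dr Db h j (n - 1)
                                 else 1 - Sprop N E R B Dr Db h j (n - 1))"
    using assms(2,3) unfolding polya_law_def by auto
  define Ev where "Ev = hist_event M N Z (n-1) h"
  define p where "p = (\<lambda>j b. if b then Sprop N E R B Dr Db h j (n - 1) else 1 - Sprop N E R B Dr Db h j (n - 1))"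
  define ev where "ev = (\<lambda>J z. Ev \<inter> {\<omega>\<in>space M. \<forall>j\<in>J. Z n j \<omega> = z j})"
  have Ev_sets: "Ev \<in> sets M" unfolding Ev_def by (rule hist_event_meas[OF meas])
  have ev_sets: "J \<subseteq> {1..N} \<Longrightarrow> ev J z \<in> sets M" for J z
    unfolding ev_def using Ev_sets ev_meas[OF meas assms(3)] by blast
  have main: "\<forall>z. measure M (ev ({1..N}-K) z) = measure M Ev * (\<Prod>j\<in>{1..N}-K. p j (z j))"
    if "K \<subseteq> {1..N}" for K
  proof -
    have "finite K" by (metis that finite_atLeastAtMost finite_subset)
    then show ?thesis using that
    proof (induction K rule: finite_subset_induct)
      case empty
      then show ?case using law by (simp add: ev_def Ev_def p_def)
    next
      case (insert k K)
      show ?case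
      proof
        fix z
        let ?J = "{1..N} - K" and ?J' = "{1..N} - insert k K"
        have J: "?J = insert k ?J'" "k \<notin> ?J'" using insert by auto
        have un: "ev ?J' z = ev ?J (z(k:=True)) \<union> ev ?J (z(k:=False))"
          unfolding ev_def J(1) by auto
        have dis: "ev ?J (z(k:=True)) \<inter> ev ?J (z(k:=False)) = {}"
          unfolding ev_def J(1) by auto
        have pr: "(\<Prod>j\<in>?J. p j ((z(k:=b)) j)) = p k b * (\<Prod>j\<in>?J'. p j (z j))" for b
        proof -
          have "(\<Prod>j\<in>?J. p j ((z(k:=b)) j)) = p k b * (\<Prod>j\<in>?J'. p j ((z(k:=b)) j))"
            unfolding J(1) using J(2) by (simp add: prod.insert)
          also have "(\<Prod>j\<in>?J'. p j ((z(k:=b)) j)) = (\<Prod>j\<in>?J'. p j (z j))"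
            using J(2) by (intro prod.cong) auto
          finally show ?thesis .
        qed
        have "measure M (ev ?J' z) = measure M (ev ?J (z(k:=True))) + measure M (ev ?J (z(k:=False)))"
          unfolding un by (rule finite_measure_Union[OF ev_sets ev_sets dis]) auto
        also have "\<dots> = measure M Ev * (\<Prod>j\<in>?J'. p j (z j)) * (p k True + p k False)"
          using insert.IH pr by (simp add: algebra_simps)
        also have "p k True + p k False = 1" by (simp add: p_def)
        finally show "measure M (ev ?J' z) = measure M Ev * (\<Prod>j\<in>?J'. p j (z j))" by simp
      qed
    qed
  qed
  have "{1..N} - ({1..N} - {i}) = {i}" using assms(4) by auto
  then have "measure M (ev {i} (\<lambda>_. True)) = measure M Ev * p i True"
    using main[of "{1..N} - {i}"] by auto
  moreover have "ev {i} (\<lambda>_. True) = Ev \<inter> {\<omega>\<in>space M. Z n i \<omega>}" by (auto simp: ev_def)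
  ultimately show ?thesis by (simp add: Ev_def p_def)
qed


lemma cexp_ind:
  assumes "prob_space M" "polya_law M N E R B Dr Db Z" "n \<ge> 1" "i \<in> {1..N}"
  shows "AE \<omega> in M. real_cond_exp M (draw_filtration M N Z (n-1)) (\<lambda>\<omega>. if Z n i \<omega> then 1 else 0) \<omega>
           = Sprop N E R B Dr Db (hist N Z (n-1) \<omega>) i (n-1)"
proof -
  interpret prob_space M by fact
  have meas: "\<forall>t j. t \<ge> 1 \<longrightarrow> j \<in> {1..N} \<longrightarrow> Z t j \<in> measurable M (count_space UNIV)"
    using assms(2) unfolding polya_law_def by auto
  define F where "F = draw_filtration M N Z (n-1)"
  have subalg: "subalgebra M F" unfolding F_def by (rule filt_subalg[OF meas])
  interpret finite_measure_subalgebra M F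
    by unfold_locales (rule subalg)
  define H where "H = Hset N (n-1)"
  define Zs where "Zs = {\<omega>\<in>space M. Z n i \<omega>}"
  define he where "he = (\<lambda>h. hist_event M N Z (n-1) h)"
  define S where "S = (\<lambda>\<omega>. Sprop N E R B Dr Db (hist N Z (n-1) \<omega>) i (n-1))"
  define ind where "ind = (\<lambda>\<omega>. if Z n i \<omega> then 1 else (0::real))"
  have ind_hist: "ind = (\<lambda>\<omega>. (\<lambda>h. if h n i then 1 else 0) (hist N Z n \<omega>))"
    using assms(3,4) by (auto simp: ind_def hist_def fun_eq_iff)
  have int_ind: "integrable M ind" unfolding ind_hist by (rule integrable_hist[OF assms(1) meas])
  have int_S: "integrable M S" unfolding S_def by (rule integrable_hist[OF assms(1) meas])
  have meas_S: "S \<in> borel_measurable F" unfolding S_def F_def by (rule comp_hist_meas_filt)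
  have he_sets: "he h \<in> sets M" for h unfolding he_def by (rule hist_event_meas[OF meas])
  have Zs_sets: "Zs \<in> sets M" unfolding Zs_def using ev_meas[OF meas assms(3), of "{i}" "\<lambda>_. True"] assms(4) by simp
  have he_iff: "\<omega> \<in> space M \<Longrightarrow> h \<in> H \<Longrightarrow> \<omega> \<in> he h \<longleftrightarrow> hist N Z (n-1) \<omega> = h" for \<omega> h
    using hist_eq_event[of h N "n-1" M Z] unfolding he_def H_def by blast
  have "AE x in M. real_cond_exp M F ind x = S x"
  proof (rule real_cond_exp_charact[OF _ int_ind int_S meas_S])
    fix A assume "A \<in> sets F"
    then obtain Bs where A: "A = hist N Z (n-1) -` Bs \<inter> space M"
      unfolding F_def draw_filtration_def by (auto simp: sets_vimage_algebra2)
    have fin: "finite (Bs \<inter> H)" using Hset_finite unfolding H_def by auto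
    have eq1: "indicator A \<omega> * ind \<omega> = (\<Sum>h\<in>Bs \<inter> H. indicator (he h \<inter> Zs) \<omega>)"
      if \<omega>: "\<omega> \<in> space M" for \<omega>
    proof -
      have "(\<Sum>h\<in>Bs \<inter> H. indicator (he h \<inter> Zs) \<omega>) = (\<Sum>h\<in>Bs \<inter> H. if hist N Z (n-1) \<omega> = h then ind \<omega> else 0)"
        using he_iff[OF \<omega>] \<omega> by (intro sum.cong) (auto simp: indicator_def Zs_def ind_def)
      also have "\<dots> = (if hist N Z (n-1) \<omega> \<in> Bs \<inter> H then ind \<omega> else 0)"
        using fin by (simp add: sum.delta)
      finally show ?thesis using \<omega> hist_in_Hset[of N Z "n-1" \<omega>] by (auto simp: A H_def indicator_def)
    qed
    have eq2: "indicator A \<omega> * S \<omega> = (\<Sum>h\<in>Bs \<inter> H. Sprop N E R B Dr Db h i (n-1) * indicator (he h) \<omega>)"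
      if \<omega>: "\<omega> \<in> space M" for \<omega>
    proof -
      have "(\<Sum>h\<in>Bs \<inter> H. Sprop N E R B Dr Db h i (n-1) * indicator (he h) \<omega>)
           = (\<Sum>h\<in>Bs \<inter> H. if hist N Z (n-1) \<omega> = h then S \<omega> else 0)"
        using he_iff[OF \<omega>] \<omega> by (intro sum.cong) (auto simp: indicator_def S_def)
      also have "\<dots> = (if hist N Z (n-1) \<omega> \<in> Bs \<inter> H then S \<omega> else 0)"
        using fin by (simp add: sum.delta)
      finally show ?thesis using \<omega> hist_in_Hset[of N Z "n-1" \<omega>] by (auto simp: A H_def indicator_def)
    qed
    have "(\<integral>x\<in>A. ind x \<partial>M) = (\<integral>x. (\<Sum>h\<in>Bs \<inter> H. indicator (he h \<inter> Zs) x) \<partial>M)"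
      unfolding set_lebesgue_integral_def by (intro Bochner_Integration.integral_cong) (auto simp: eq1)
    also have "\<dots> = (\<Sum>h\<in>Bs \<inter> H. measure M (he h \<inter> Zs))"
    proof (subst Bochner_Integration.integral_sum)
      show "integrable M (indicator (he h \<inter> Zs) :: _ \<Rightarrow> real)" for h
        using he_sets Zs_sets by (intro integrable_real_indicator) (auto simp: less_top[symmetric] emeasure_finite)
      show "(\<Sum>h\<in>Bs \<inter> H. integral\<^sup>L M (indicator (he h \<inter> Zs))) = (\<Sum>h\<in>Bs \<inter> H. measure M (he h \<inter> Zs))"
        using Zs_def by (intro sum.cong) (auto simp: Int_absorb2 Int_assoc)
    qed
    also have "\<dots> = (\<Sum>h\<in>Bs \<inter> H. Sprop N E R B Dr Db h i (n-1) * measure M (he h))"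
      using law_marginal[OF assms] unfolding he_def Zs_def by (intro sum.cong) auto
    also have "\<dots> = (\<integral>x. (\<Sum>h\<in>Bs \<inter> H. Sprop N E R B Dr Db h i (n-1) * indicator (he h) x) \<partial>M)"
    proof (subst Bochner_Integration.integral_sum)
      show "integrable M (\<lambda>x. Sprop N E R B Dr Db h i (n-1) * indicator (he h) x)" for h
        using he_sets by (intro integrable_mult_right integrable_real_indicator) (auto simp: less_top[symmetric] emeasure_finite)
      show "(\<Sum>h\<in>Bs \<inter> H. Sprop N E R B Dr Db h i (n - 1) * measure M (he h)) =
          (\<Sum>h\<in>Bs \<inter> H. \<integral>x. Sprop N E R B Dr Db h i (n - 1) * indicator (he h) x \<partial>M)"
        using he_sets sets.sets_into_space
        by (intro sum.cong) (auto simp: Int_absorb2 he_sets)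
    qed
    also have "\<dots> = (\<integral>x\<in>A. S x \<partial>M)"
      unfolding set_lebesgue_integral_def by (intro Bochner_Integration.integral_cong) (auto simp: eq2)
    finally show "(\<integral>x\<in>A. ind x \<partial>M) = (\<integral>x\<in>A. S x \<partial>M)" .
  qed
  then show ?thesis unfolding F_def ind_def S_def .
qed


lemma alg_equiv:
  fixes c' d k a s :: real
  assumes "c' > 0" "d > 0" "k > 0"
  shows "((c' * a + d * ((a + s) / (k + 1))) / (c' + d) = a) \<longleftrightarrow> (1 / k * s = a)"
proof -
  have "((c' * a + d * ((a + s) / (k + 1))) / (c' + d) = a) \<longleftrightarrow> (c' * a + d * ((a + s) / (k + 1)) = a * (c' + d))"
    using assms by (subst divide_eq_eq) auto
  also have "\<dots> \<longleftrightarrow> (d * ((a + s) / (k + 1)) = d * a)" by (simp add: algebra_simps)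
  also have "\<dots> \<longleftrightarrow> ((a + s) / (k + 1) = a)" using assms by (metis mult_cancel_left less_irrefl)
  also have "\<dots> \<longleftrightarrow> (a + s = a * (k + 1))" using assms by (subst divide_eq_eq) auto
  also have "\<dots> \<longleftrightarrow> (s = a * k)" by (simp add: algebra_simps)
  also have "\<dots> \<longleftrightarrow> (s / k = a)" using assms by (subst divide_eq_eq) auto
  also have "\<dots> \<longleftrightarrow> (1 / k * s = a)" by simp
  finally show ?thesis .
qed

theorem theorem1:
  fixes M :: "'a measure" and N :: nat and E :: "nat \<Rightarrow> nat \<Rightarrow> bool"
    and R B :: "nat \<Rightarrow> nat" and Dr Db :: "nat \<Rightarrow> nat \<Rightarrow> nat"
    and Z :: "nat \<Rightarrow> nat \<Rightarrow> 'a \<Rightarrow> bool" and T \<Delta> :: nat and i :: nat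
  assumes "prob_space M"
    and "N \<ge> 2"
    and "simple_graph N E" and "connected_graph N E"
    and "\<forall>j\<in>{1..N}. R j > 0 \<and> B j > 0"
    and "\<forall>j\<in>{1..N}. R j + B j = T"
    and "\<Delta> > 0"
    and "\<forall>j t. Dr j t = \<Delta> \<and> Db j t = \<Delta>"
    and "polya_law M N E R B Dr Db Z"
    and "i \<in> {1..N}"
  shows "is_martingale_wrt_draws M N Z (Uproc N R B Dr Db Z i) \<longleftrightarrow>
         (AE \<omega> in M. \<forall>n \<ge> 1.
            (1 / real (card (nbrs N E i))) * (\<Sum>j\<in>nbrs N E i. Uproc N R B Dr Db Z j (n - 1) \<omega>)
              = Uproc N R B Dr Db Z i (n - 1) \<omega>)"
proof -
  interpret prob_space M by fact
  note iN = assms(10)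
  have meas: "\<forall>t j. t \<ge> 1 \<longrightarrow> j \<in> {1..N} \<longrightarrow> Z t j \<in> measurable M (count_space UNIV)"
    using assms(9) unfolding polya_law_def by (rule conjunct1)
  have Dr: "\<And>j t. Dr j t = \<Delta>" "\<And>j t. Db j t = \<Delta>" using assms(8) by auto
  define c where "c = (\<lambda>m::nat. real T + real m * real \<Delta>)"
  have Tpos: "T > 0" using assms(5,6) iN by fastforce
  have c_pos: "c m > 0" for m using Tpos unfolding c_def by (simp add: add_pos_nonneg)
  have c_suc: "n \<ge> 1 \<Longrightarrow> c n = c (n-1) + real \<Delta>" for n
    unfolding c_def by (simp add: of_nat_diff algebra_simps)
  have Xb: "Xballs R B Dr Db z j m = c m" if j: "j \<in> {1..N}" for j z m
  proof -
    have "R j + B j = T" using assms(6) j by blast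
    then have "real (R j) + real (B j) = real T" by (metis of_nat_add)
    then show ?thesis using Xballs_const[OF assms(8)] unfolding c_def by simp
  qed
  have Ueq: "Uproc N R B Dr Db Z j m \<omega> = (real (R j) + (\<Sum>t\<in>{1..m}. if Z t j \<omega> then real \<Delta> else 0)) / c m"
    if j: "j \<in> {1..N}" for j m \<omega>
  proof -
    have "(\<Sum>t\<in>{1..m}. if hist N Z m \<omega> t j then real (Dr j t) else 0) = (\<Sum>t\<in>{1..m}. if Z t j \<omega> then real \<Delta> else 0)"
      using j by (intro sum.cong) (auto simp: hist_def Dr)
    then show ?thesis unfolding Uproc_def Uprop_def Xb[OF j] by simp
  qed
  have rec: "Uproc N R B Dr Db Z i n \<omega> = (c (n-1) * Uproc N R B Dr Db Z i (n-1) \<omega> + real \<Delta> * (if Z n i \<omega> then 1 else 0)) / c n"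
    if "n \<ge> 1" for n \<omega>
  proof -
    have "n \<noteq> 0" using that by simp
    then obtain m where n: "n = Suc m" using not0_implies_Suc by blast
    have "(\<Sum>t\<in>{1..Suc m}. if Z t i \<omega> then real \<Delta> else 0) = (\<Sum>t\<in>{1..m}. if Z t i \<omega> then real \<Delta> else 0) + (if Z (Suc m) i \<omega> then real \<Delta> else 0)"
      by (simp add: atLeastAtMostSuc_conv)
    moreover have "c m * Uproc N R B Dr Db Z i m \<omega> = real (R i) + (\<Sum>t\<in>{1..m}. if Z t i \<omega> then real \<Delta> else 0)"
      using Ueq[OF iN] c_pos[of m] by simp
    ultimately show ?thesis unfolding n using Ueq[OF iN, of "Suc m"] by simp
  qed
  have sg: "\<forall>i j. E i j \<longrightarrow> i \<in> {1..N} \<and> j \<in> {1..N}" "\<forall>i. \<not> E i i"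
    using assms(3) unfolding simple_graph_def by auto
  have nb_sub: "nbrs N E i \<subseteq> {1..N}" by (auto simp: nbrs_def)
  have nb_fin: "finite (nbrs N E i)" by (metis nb_sub finite_atLeastAtMost finite_subset)
  have i_notin: "i \<notin> nbrs N E i" using sg(2) by (auto simp: nbrs_def)
  have nb_ne: "nbrs N E i \<noteq> {}"
  proof -
    define j where "j = (if i = 1 then 2 else 1::nat)"
    have j: "j \<in> {1..N}" "j \<noteq> i" using assms(2) iN by (auto simp: j_def)
    have "E\<^sup>*\<^sup>* i j" using assms(4) iN j unfolding connected_graph_def by auto
    then obtain y where "E i y"
      using j(2) by (cases rule: converse_rtranclpE) auto
    then have "y \<in> nbrs N E i" using sg(1) by (auto simp: nbrs_def)
    then show ?thesis by auto
  qed
  define k where "k = real (card (nbrs N E i))"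
  have k_pos: "k > 0" using nb_fin nb_ne unfolding k_def by (simp add: card_gt_0_iff)
  have Sp: "Sprop N E R B Dr Db (hist N Z m \<omega>) i m
      = (Uproc N R B Dr Db Z i m \<omega> + (\<Sum>j\<in>nbrs N E i. Uproc N R B Dr Db Z j m \<omega>)) / (k + 1)" for m \<omega>
  proof -
    have cn: "cnbrs N E i = insert i (nbrs N E i)" by (simp add: cnbrs_def)
    have cn_sub: "cnbrs N E i \<subseteq> {1..N}" using nb_sub iN cn by auto
    have s1: "(\<Sum>j\<in>cnbrs N E i. Uprop R B Dr Db (hist N Z m \<omega>) j m * Xballs R B Dr Db (hist N Z m \<omega>) j m)
        = (\<Sum>j\<in>cnbrs N E i. Uproc N R B Dr Db Z j m \<omega>) * c m"
      unfolding sum_distrib_right using cn_sub Xb by (intro sum.cong) (auto simp: Uproc_def)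
    have s2: "(\<Sum>j\<in>cnbrs N E i. Xballs R B Dr Db (hist N Z m \<omega>) j m) = (k + 1) * c m"
    proof -
      have "(\<Sum>j\<in>cnbrs N E i. Xballs R B Dr Db (hist N Z m \<omega>) j m) = (\<Sum>j\<in>cnbrs N E i. c m)"
        using cn_sub Xb by (intro sum.cong) auto
      also have "\<dots> = (k + 1) * c m" unfolding cn k_def using nb_fin i_notin by simp
      finally show ?thesis .
    qed
    have s3: "(\<Sum>j\<in>cnbrs N E i. Uproc N R B Dr Db Z j m \<omega>) = Uproc N R B Dr Db Z i m \<omega> + (\<Sum>j\<in>nbrs N E i. Uproc N R B Dr Db Z j m \<omega>)"
      unfolding cn using nb_fin i_notin by simp
    have "c m \<noteq> 0" using c_pos[of m] by simp
    then show ?thesis unfolding Sprop_def s1 s2 s3 by (rule mult_divide_mult_cancel_right)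
  qed
  have Ufun: "Uproc N R B Dr Db Z j m = (\<lambda>\<omega>. (\<lambda>h. Uprop R B Dr Db h j m) (hist N Z m \<omega>))" for j m
    by (simp add: Uproc_def fun_eq_iff)
  have int_U: "integrable M (Uproc N R B Dr Db Z j m)" for j m
    unfolding Ufun by (rule integrable_hist[OF assms(1) meas])
  have CE: "AE \<omega> in M. real_cond_exp M (draw_filtration M N Z (n-1)) (Uproc N R B Dr Db Z i n) \<omega>
      = (c (n-1) * Uproc N R B Dr Db Z i (n-1) \<omega> + real \<Delta> * Sprop N E R B Dr Db (hist N Z (n-1) \<omega>) i (n-1)) / c n"
    if n1: "n \<ge> 1" for n
  proof -
    define F where "F = draw_filtration M N Z (n-1)"
    have subalg: "subalgebra M F" unfolding F_def by (rule filt_subalg[OF meas])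
    interpret finite_measure_subalgebra M F
      by unfold_locales (rule subalg)
    define a where "a = Uproc N R B Dr Db Z i (n-1)"
    define ind where "ind = (\<lambda>\<omega>. if Z n i \<omega> then 1 else (0::real))"
    define \<alpha> where "\<alpha> = c (n-1) / c n"
    define \<beta> where "\<beta> = real \<Delta> / c n"
    have ind_hist: "ind = (\<lambda>\<omega>. (\<lambda>h. if h n i then 1 else 0) (hist N Z n \<omega>))"
      using n1 iN by (auto simp: ind_def hist_def fun_eq_iff)
    have int_ind: "integrable M ind" unfolding ind_hist by (rule integrable_hist[OF assms(1) meas])
    have int_a: "integrable M a" unfolding a_def by (rule int_U)
    have meas_a: "a \<in> borel_measurable F" unfolding a_def Ufun F_def by (rule comp_hist_meas_filt)
    have Un: "Uproc N R B Dr Db Z i n = (\<lambda>\<omega>. \<alpha> * a \<omega> + \<beta> * ind \<omega>)"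
      using c_pos[of n] by (auto simp: fun_eq_iff rec[OF n1] a_def ind_def \<alpha>_def \<beta>_def field_simps)
    have A1: "AE \<omega> in M. real_cond_exp M F (\<lambda>\<omega>. \<alpha> * a \<omega> + \<beta> * ind \<omega>) \<omega>
        = real_cond_exp M F (\<lambda>\<omega>. \<alpha> * a \<omega>) \<omega> + real_cond_exp M F (\<lambda>\<omega>. \<beta> * ind \<omega>) \<omega>"
      by (rule real_cond_exp_add) (auto intro: int_a int_ind)
    have A2: "AE \<omega> in M. real_cond_exp M F (\<lambda>\<omega>. \<alpha> * a \<omega>) \<omega> = \<alpha> * real_cond_exp M F a \<omega>"
      by (rule real_cond_exp_cmult[OF int_a])
    have A3: "AE \<omega> in M. real_cond_exp M F (\<lambda>\<omega>. \<beta> * ind \<omega>) \<omega> = \<beta> * real_cond_exp M F ind \<omega>"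
      by (rule real_cond_exp_cmult[OF int_ind])
    have A4: "AE \<omega> in M. real_cond_exp M F a \<omega> = a \<omega>"
      by (rule real_cond_exp_F_meas[OF int_a meas_a])
    have A5: "AE \<omega> in M. real_cond_exp M F ind \<omega> = Sprop N E R B Dr Db (hist N Z (n-1) \<omega>) i (n-1)"
      unfolding F_def ind_def by (rule cexp_ind[OF assms(1) assms(9) n1 iN])
    show ?thesis
      unfolding F_def[symmetric] Un
      using A1 A2 A3 A4 A5
    proof eventually_elim
      case (elim \<omega>)
      then show ?case using c_pos[of n] by (simp add: \<alpha>_def \<beta>_def a_def add_divide_distrib)
    qed
  qed
  have key: "((c (n-1) * Uproc N R B Dr Db Z i (n-1) \<omega> + real \<Delta> * Sprop N E R B Dr Db (hist N Z (n-1) \<omega>) i (n-1)) / c n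
        = Uproc N R B Dr Db Z i (n-1) \<omega>) \<longleftrightarrow>
      ((1 / real (card (nbrs N E i))) * (\<Sum>j\<in>nbrs N E i. Uproc N R B Dr Db Z j (n - 1) \<omega>)
              = Uproc N R B Dr Db Z i (n - 1) \<omega>)" if n1: "n \<ge> 1" for n \<omega>
  proof -
    have d: "real \<Delta> > 0" using assms(7) by simp
    show ?thesis unfolding Sp c_suc[OF n1] k_def[symmetric] by (rule alg_equiv[OF c_pos d k_pos])
  qed
  show ?thesis
  proof
    assume mart: "is_martingale_wrt_draws M N Z (Uproc N R B Dr Db Z i)"
    have "AE \<omega> in M. n \<ge> 1 \<longrightarrow> (1 / real (card (nbrs N E i))) * (\<Sum>j\<in>nbrs N E i. Uproc N R B Dr Db Z j (n - 1) \<omega>)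
              = Uproc N R B Dr Db Z i (n - 1) \<omega>" for n
    proof (cases "n \<ge> 1")
      case True
      have m: "AE \<omega> in M. real_cond_exp M (draw_filtration M N Z (n - 1)) (Uproc N R B Dr Db Z i n) \<omega> = Uproc N R B Dr Db Z i (n - 1) \<omega>"
        using mart True unfolding is_martingale_wrt_draws_def by auto
      from m CE[OF True] show ?thesis
      proof eventually_elim
        case (elim \<omega>)
        have "(c (n-1) * Uproc N R B Dr Db Z i (n-1) \<omega> + real \<Delta> * Sprop N E R B Dr Db (hist N Z (n-1) \<omega>) i (n-1)) / c n
            = Uproc N R B Dr Db Z i (n-1) \<omega>" using elim by metis
        then show ?case using key[OF True, of \<omega>] by blast
      qed
    qed auto
    then show "AE \<omega> in M. \<forall>n \<ge> 1. (1 / real (card (nbrs N E i))) * (\<Sum>j\<in>nbrs N E i. Uproc N R B Dr Db Z j (n - 1) \<omega>)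
              = Uproc N R B Dr Db Z i (n - 1) \<omega>"
      by (subst AE_all_countable) auto
  next
    assume H: "AE \<omega> in M. \<forall>n \<ge> 1. (1 / real (card (nbrs N E i))) * (\<Sum>j\<in>nbrs N E i. Uproc N R B Dr Db Z j (n - 1) \<omega>)
              = Uproc N R B Dr Db Z i (n - 1) \<omega>"
    show "is_martingale_wrt_draws M N Z (Uproc N R B Dr Db Z i)"
      unfolding is_martingale_wrt_draws_def
    proof (intro conjI allI impI)
      show "integrable M (Uproc N R B Dr Db Z i n)" for n by (rule int_U)
      fix n :: nat assume n1: "n \<ge> 1"
      from H CE[OF n1] show "AE \<omega> in M. real_cond_exp M (draw_filtration M N Z (n - 1)) (Uproc N R B Dr Db Z i n) \<omega> = Uproc N R B Dr Db Z i (n - 1) \<omega>"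
      proof eventually_elim
        case (elim \<omega>)
        have "(1 / real (card (nbrs N E i))) * (\<Sum>j\<in>nbrs N E i. Uproc N R B Dr Db Z j (n - 1) \<omega>)
              = Uproc N R B Dr Db Z i (n - 1) \<omega>" using elim(1) n1 by blast
        then have "(c (n-1) * Uproc N R B Dr Db Z i (n-1) \<omega> + real \<Delta> * Sprop N E R B Dr Db (hist N Z (n-1) \<omega>) i (n-1)) / c n
            = Uproc N R B Dr Db Z i (n-1) \<omega>" using key[OF n1, of \<omega>] by blast
        then show ?case using elim(2) by metis
      qed
    qed
  qed
qed

end
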